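(* Let $k\ge 1$ and $n\ge 2k$. Then \[ l_k(n)=\binom{n-1}{\lceil k/2\rceil-1}+\binom{n-1}{\lfloor k/2\rfloor-1}. \] Equivalently, for $k\ge1$: $l_{2k}(n)=2\binom{n-1}{k-1}$ whenever $n\ge 4k$, and $l_{2k+1}(n)=\binom{n}{k}$ whenever $n\ge 4k+2$. In particular, for $n\ge 2k$, $l_k(n)$ is a polynomial in $n$ of degree $\lceil (k-2)/2\rceil$.
   Context: For a positive integer $m$, $P_m$ denotes the path with vertex set $[m]=\{1,\dots,m\}$ in which $i$ and $j$ are adjacent iff $|i-j|=1$. An endomorphism of $P_n$ is a map $f:[n]\to[n]$ with $|f(i)-f(i+1)|=1$ for all $1\le i\le n-1$. Every endomorphism $f$ induces a partition of $[n]$ whose blocks are the nonempty fibers $f^{-1}(y)$. Let $\mathscr C(P_n)$ be the set of partitions of $[n]$ induced by endomorphisms of $P_n$, and for $1\le k\le n-1$ let $l_k(n)=|\{\rho\in\mathscr C(P_n): \rho \text{ has exactly } n-k+1 \text{ blocks}\}|$. Convention: $\binom{a}{b}=0$ if $b<0$ or $b>a$. *)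

theory Defs
  imports Complex_Main
begin

text \<open>Endomorphisms of the path P_n on vertex set [n] = {1..n}. Maps are represented
  as functions nat => nat; only their values on {1..n} matter.\<close>
definition path_endo :: "nat \<Rightarrow> (nat \<Rightarrow> nat) \<Rightarrow> bool" where
  "path_endo n f \<longleftrightarrow> (\<forall>i\<in>{1..n}. f i \<in> {1..n}) \<and>
     (\<forall>i. 1 \<le> i \<and> i \<le> n - 1 \<longrightarrow> \<bar>int (f i) - int (f (i + 1))\<bar> = 1)"

definition induced_partition :: "nat \<Rightarrow> (nat \<Rightarrow> nat) \<Rightarrow> nat set set" where
  "induced_partition n f = {{i \<in> {1..n}. f i = y} | y. y \<in> f ` {1..n}}"

definition C_path :: "nat \<Rightarrow> nat set set set" where
  "C_path n = {induced_partition n f | f. path_endo n f}"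

definition l_count :: "nat \<Rightarrow> nat \<Rightarrow> nat" where
  "l_count k n = card {\<rho> \<in> C_path n. card \<rho> = n - k + 1}"

text \<open>Binomial coefficient with integer lower index; 0 if b < 0 (and 0 if b > a).\<close>
definition zbinom :: "nat \<Rightarrow> int \<Rightarrow> nat" where
  "zbinom a b = (if b < 0 then 0 else a choose nat b)"

end

theory Submission
  imports Defs
begin

fun Af :: "nat \<Rightarrow> int \<Rightarrow> int" where
  "Af 0 h = (if h \<le> 0 then 1 else 0)"
| "Af (Suc m) h = (if h \<le> 0 then 2^(Suc m) else Af m (h-1) + Af m (h+1))"

lemma Af_nonpos: "h \<le> 0 \<Longrightarrow> Af m h = 2^m" by (cases m) auto
lemma Af_big: "int m < h \<Longrightarrow> Af m h = 0" by (induction m arbitrary: h) auto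
lemma Af_rec: "1 \<le> h \<Longrightarrow> Af (Suc m) h = Af m (h-1) + Af m (h+1)" by simp

lemma binom_pascal': "0 < t \<Longrightarrow> (Suc m choose t) = (m choose t) + (m choose (t - 1))"
  by (cases t) auto

lemma D_closed: "0 \<le> h \<Longrightarrow> Af m h - Af m (h+1) =
   (if h \<le> int m then int (m choose nat ((int m - h) div 2)) else 0)"
proof (induction m arbitrary: h)
  case 0
  then show ?case by auto
next
  case (Suc m)
  show ?case
  proof (cases "h = 0")
    case True
    have e: "Af (Suc m) 0 - Af (Suc m) 1 = (Af m 0 - Af m 1) + (Af m 1 - Af m 2)"
      using Af_nonpos[of 0 m] by simp
    have i0: "Af m 0 - Af m 1 = int (m choose (m div 2))" using Suc.IH[of 0] by (simp add: nat_div_distrib)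
    have i1: "Af m 1 - Af m 2 = (if 1 \<le> m then int (m choose ((m - 1) div 2)) else 0)"
      using Suc.IH[of 1] by (auto simp: nat_div_distrib nat_diff_distrib)
    have "(Suc m choose (Suc m div 2)) = (m choose (m div 2)) + (if 1 \<le> m then (m choose ((m - 1) div 2)) else 0)"
    proof (cases "even m")
      case True
      then obtain a where a: "m = 2*a" by auto
      show ?thesis
      proof (cases a)
        case 0 then show ?thesis using a by simp
      next
        case (Suc b)
        have "Suc m div 2 = a" "m div 2 = a" "(m - 1) div 2 = a - 1" using a Suc by auto
        then show ?thesis using binom_pascal'[of a m] Suc a by auto
      qed
    next
      case False
      then obtain a where a: "m = 2*a+1" by (metis oddE)
      have "Suc m div 2 = a+1" "m div 2 = a" "(m - 1) div 2 = a" using a by auto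
      moreover have "(Suc m choose (a+1)) = (m choose (a+1)) + (m choose a)"
        using binom_pascal'[of "a+1" m] by simp
      moreover have "(m choose (a+1)) = (m choose a)"
        using binomial_symmetric[of "a+1" m] a by simp
      ultimately show ?thesis using a by simp
    qed
    hence bb: "int (Suc m choose (Suc m div 2)) = int (m choose (m div 2)) + (if 1 \<le> m then int (m choose ((m - 1) div 2)) else 0)"
      by simp
    have q: "nat ((1 + int m) div 2) = Suc m div 2" by (simp add: nat_div_distrib)
    show ?thesis using True e i0 i1 q bb by simp
  next
    case False
    hence h1: "1 \<le> h" using Suc.prems by simp
    have e: "Af (Suc m) h - Af (Suc m) (h+1) = (Af m (h-1) - Af m h) + (Af m (h+1) - Af m (h+2))"
      using h1 by (simp add: add.commute)
    have ia: "Af m (h-1) - Af m h = (if h - 1 \<le> int m then int (m choose nat ((int m - (h-1)) div 2)) else 0)"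
      using Suc.IH[of "h-1"] h1 by simp
    have ib: "Af m (h+1) - Af m (h+2) = (if h + 1 \<le> int m then int (m choose nat ((int m - (h+1)) div 2)) else 0)"
      using Suc.IH[of "h+1"] h1 by (simp add: add.assoc)
    show ?thesis
    proof (cases "h \<le> int m + 1")
      case False then show ?thesis using e ia ib by simp
    next
      case True
      define t where "t = nat ((int (Suc m) - h) div 2)"
      have t1: "nat ((int m - (h-1)) div 2) = t" unfolding t_def by simp
      have t3: "nat ((1 + int m - h) div 2) = t" unfolding t_def by simp
      show ?thesis
      proof (cases "h + 1 \<le> int m")
        case True
        have tpos: "0 < t" unfolding t_def using True by simp
        have t2: "nat ((int m - (h+1)) div 2) = t - 1" unfolding t_def using True
          by (simp add: nat_diff_distrib)
        show ?thesis using e ia ib True t1 t2 t3 binom_pascal'[OF tpos, of m] h1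
          by (simp add: t_def[symmetric])
      next
        case False
        hence "t = 0" unfolding t_def using \<open>h \<le> int m + 1\<close> by simp
        then show ?thesis using e ia ib False True t1 t3 h1 by (simp add: t_def[symmetric])
      qed
    qed
  qed
qed

fun isw :: "nat list \<Rightarrow> bool" where
  "isw (x # y # zs) = ((y = Suc x \<or> x = Suc y) \<and> isw (y # zs))"
| "isw _ = True"

definition WSs :: "nat \<Rightarrow> nat \<Rightarrow> nat \<Rightarrow> nat list set" where
  "WSs R s m = {xs. length xs = Suc m \<and> hd xs = s \<and> isw xs \<and> set xs \<subseteq> {..R}}"

lemma finite_WSs: "finite (WSs R s m)"
proof -
  have "WSs R s m \<subseteq> {xs. set xs \<subseteq> {..R} \<and> length xs = Suc m}" unfolding WSs_def by auto
  moreover have "finite {xs. set xs \<subseteq> {..R} \<and> length xs = Suc m}"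
    by (rule finite_lists_length_eq) simp
  ultimately show ?thesis by (rule finite_subset)
qed

definition Nb :: "nat \<Rightarrow> nat \<Rightarrow> nat set" where
  "Nb R s = {t. t \<le> R \<and> (t = Suc s \<or> s = Suc t)}"

lemma WSs_0: "s \<le> R \<Longrightarrow> WSs R s 0 = {[s]}"
  unfolding WSs_def by (auto simp: length_Suc_conv)

lemma WSs_Suc: "s \<le> R \<Longrightarrow> WSs R s (Suc m) = Cons s ` (\<Union>t\<in>Nb R s. WSs R t m)"
proof (intro equalityI subsetI)
  fix xs assume xs: "xs \<in> WSs R s (Suc m)" "s \<le> R"
  then obtain y zs where e: "xs = s # y # zs"
    unfolding WSs_def by (auto simp: length_Suc_conv)
  have "y # zs \<in> WSs R y m" using xs e unfolding WSs_def by auto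
  moreover have "y \<in> Nb R s" using xs e unfolding WSs_def Nb_def by auto
  ultimately show "xs \<in> Cons s ` (\<Union>t\<in>Nb R s. WSs R t m)" using e by blast
next
  fix xs assume xs: "xs \<in> Cons s ` (\<Union>t\<in>Nb R s. WSs R t m)" and sR: "s \<le> R"
  then obtain t ys where e: "xs = s # ys" and t: "t \<in> Nb R s" and ys: "ys \<in> WSs R t m" by auto
  then obtain zs where ys': "ys = t # zs" unfolding WSs_def by (cases ys) auto
  show "xs \<in> WSs R s (Suc m)" using e ys ys' t sR unfolding WSs_def Nb_def by auto
qed

lemma card_WSs_Suc: "s \<le> R \<Longrightarrow> card (WSs R s (Suc m)) = (\<Sum>t\<in>Nb R s. card (WSs R t m))"
proof -
  assume sR: "s \<le> R"
  have "card (WSs R s (Suc m)) = card (\<Union>t\<in>Nb R s. WSs R t m)"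
    unfolding WSs_Suc[OF sR] by (rule card_image) (simp add: inj_on_def)
  also have "\<dots> = (\<Sum>t\<in>Nb R s. card (WSs R t m))"
  proof (rule card_UN_disjoint)
    show "finite (Nb R s)" unfolding Nb_def by auto
    show "\<forall>i\<in>Nb R s. finite (WSs R i m)" using finite_WSs by auto
    show "\<forall>i\<in>Nb R s. \<forall>j\<in>Nb R s. i \<noteq> j \<longrightarrow> WSs R i m \<inter> WSs R j m = {}"
      unfolding WSs_def by auto
  qed
  finally show ?thesis .
qed

definition Fm :: "nat \<Rightarrow> int \<Rightarrow> int \<Rightarrow> int" where
  "Fm m R s = 2^m - Af m (s+1) - Af m (R+1-s) + Af m (R+3+s) + Af m (2*R+3-s)"

lemma Fm_low: "int m < 2*R+4 \<Longrightarrow> Fm m R (-1) = 0"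
  unfolding Fm_def using Af_big[of m "2*R+4"] Af_nonpos[of 0 m] by (simp add: algebra_simps)

lemma Fm_high: "int m < 2*R+4 \<Longrightarrow> Fm m R (R+1) = 0"
  unfolding Fm_def using Af_big[of m "2*R+4"] Af_nonpos[of 0 m] by (simp add: algebra_simps)

lemma Fm_rec: "0 \<le> s \<Longrightarrow> s \<le> R \<Longrightarrow> Fm (Suc m) R s = Fm m R (s-1) + Fm m R (s+1)"
proof -
  assume a: "0 \<le> s" "s \<le> R"
  have 1: "Af (Suc m) (s+1) = Af m s + Af m (s+2)" using a Af_rec[of "s+1" m] by (simp add: add.commute)
  have 2: "Af (Suc m) (R+1-s) = Af m (R-s) + Af m (R+2-s)" using a Af_rec[of "R+1-s" m]
    by (simp add: algebra_simps)
  have 3: "Af (Suc m) (R+3+s) = Af m (R+2+s) + Af m (R+4+s)" using a Af_rec[of "R+3+s" m]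
    by (simp add: algebra_simps)
  have 4: "Af (Suc m) (2*R+3-s) = Af m (2*R+2-s) + Af m (2*R+4-s)" using a Af_rec[of "2*R+3-s" m]
    by (simp add: algebra_simps)
  show ?thesis unfolding Fm_def using 1 2 3 4
    by (simp add: algebra_simps)
qed

lemma H_formula: "int m \<le> 2*int R + 3 \<Longrightarrow> s \<le> R \<Longrightarrow> int (card (WSs R s m)) = Fm m (int R) (int s)"
proof (induction m arbitrary: s)
  case 0
  have "Af 0 (int s + 1) = 0" "Af 0 (int R + 1 - int s) = 0" "Af 0 (int R + 3 + int s) = 0"
       "Af 0 (2 * int R + 3 - int s) = 0" using 0 by (auto intro!: Af_big)
  then show ?case using WSs_0[OF 0(2)] unfolding Fm_def by simp
next
  case (Suc m)
  have mR: "int m < 2 * int R + 4" using Suc.prems by simp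
  have c: "card (WSs R s (Suc m)) = (\<Sum>t\<in>Nb R s. card (WSs R t m))"
    using card_WSs_Suc[OF Suc.prems(2)] .
  have nb: "Nb R s = (if 1 \<le> s then {s-1} else {}) \<union> (if s+1 \<le> R then {s+1} else {})"
    using Suc.prems unfolding Nb_def by auto
  have lo: "int (if 1 \<le> s then card (WSs R (s-1) m) else 0) = Fm m (int R) (int s - 1)"
  proof (cases "1 \<le> s")
    case True then show ?thesis using Suc.IH[of "s-1"] Suc.prems by (simp add: of_nat_diff)
  next
    case False then have "s = 0" by simp
    then show ?thesis using Fm_low[OF mR] by simp
  qed
  have hi: "int (if s+1 \<le> R then card (WSs R (s+1) m) else 0) = Fm m (int R) (int s + 1)"
  proof (cases "s+1 \<le> R")
    case True then show ?thesis using Suc.IH[of "s+1"] Suc.prems by (simp add: add.commute)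
  next
    case False then have "s = R" using Suc.prems by simp
    then show ?thesis using Fm_high[OF mR] by simp
  qed
  have "card (WSs R s (Suc m)) = (if 1 \<le> s then card (WSs R (s-1) m) else 0) +
          (if s+1 \<le> R then card (WSs R (s+1) m) else 0)"
    unfolding c nb using Suc.prems by auto
  hence "int (card (WSs R s (Suc m))) = Fm m (int R) (int s - 1) + Fm m (int R) (int s + 1)"
    using lo hi by simp
  also have "\<dots> = Fm (Suc m) (int R) (int s)" using Fm_rec[of "int s" "int R" m] Suc.prems by simp
  finally show ?case .
qed

definition Tl :: "nat \<Rightarrow> int \<Rightarrow> int" where
  "Tl m h = (\<Sum>j<Suc m. Af m (h + int j))"

lemma Tl_zero: "int m < h \<Longrightarrow> Tl m h = 0"
  unfolding Tl_def by (rule sum.neutral) (auto intro!: Af_big)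

lemma Tl_step: "1 \<le> h \<Longrightarrow> Tl m h = Af m h + Tl m (h+1)"
proof -
  assume h: "1 \<le> h"
  have "Tl m h = Af m h + (\<Sum>j<m. Af m (h + 1 + int j))"
    unfolding Tl_def by (subst sum.lessThan_Suc_shift) (simp add: algebra_simps)
  moreover have "Tl m (h+1) = (\<Sum>j<m. Af m (h + 1 + int j)) + Af m (h + 1 + int m)"
    unfolding Tl_def by simp
  moreover have "Af m (h + 1 + int m) = 0" using h by (intro Af_big) simp
  ultimately show ?thesis by simp
qed

lemma sum_Af: "1 \<le> h \<Longrightarrow> (\<Sum>s<N. Af m (h + int s)) = Tl m h - Tl m (h + int N)"
proof (induction N)
  case 0 then show ?case by simp
next
  case (Suc N)
  have "Tl m (h + int N) = Af m (h + int N) + Tl m (h + int N + 1)"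
    using Suc.prems by (intro Tl_step) simp
  then show ?case using Suc by (simp add: algebra_simps)
qed

definition Gc :: "nat \<Rightarrow> int \<Rightarrow> int" where
  "Gc m R = (R+1)*2^m - 2*(Tl m 1 - Tl m (R+2)) + 2*(Tl m (R+3) - Tl m (2*R+4))"

lemma G_closed:
  assumes "int m < 2*int R+4"
  shows "(\<Sum>s\<in>{0..R}. Fm m (int R) (int s)) = Gc m (int R)"
proof -
  have iv: "{0..R} = {..<Suc R}" by auto
  have a1: "(\<Sum>s<Suc R. Af m (int s + 1)) = Tl m 1 - Tl m (int R + 2)"
    using sum_Af[of 1 m "Suc R"] by (simp add: add.commute)
  have a2: "(\<Sum>s<Suc R. Af m (int R + 1 - int s)) = Tl m 1 - Tl m (int R + 2)"
  proof -
    have "(\<Sum>s<Suc R. Af m (int R + 1 - int s)) = (\<Sum>s<Suc R. (\<lambda>i. Af m (int i + 1)) (Suc R - Suc s))"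
      by (intro sum.cong) (auto simp: of_nat_diff algebra_simps)
    also have "\<dots> = (\<Sum>s<Suc R. Af m (int s + 1))" by (rule sum.nat_diff_reindex)
    finally show ?thesis using a1 by simp
  qed
  have a3: "(\<Sum>s<Suc R. Af m (int R + 3 + int s)) = Tl m (int R + 3) - Tl m (2 * int R + 4)"
    using sum_Af[of "int R + 3" m "Suc R"] by (simp add: algebra_simps)
  have a4: "(\<Sum>s<Suc R. Af m (2 * int R + 3 - int s)) = Tl m (int R + 3) - Tl m (2 * int R + 4)"
  proof -
    have "(\<Sum>s<Suc R. Af m (2 * int R + 3 - int s)) = (\<Sum>s<Suc R. (\<lambda>i. Af m (int R + 3 + int i)) (Suc R - Suc s))"
      by (intro sum.cong) (auto simp: of_nat_diff algebra_simps)
    also have "\<dots> = (\<Sum>s<Suc R. Af m (int R + 3 + int s))" by (rule sum.nat_diff_reindex)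
    finally show ?thesis using a3 by simp
  qed
  have "(\<Sum>s\<in>{0..R}. Fm m (int R) (int s)) =
     (\<Sum>s<Suc R. 2^m) - (\<Sum>s<Suc R. Af m (int s + 1)) - (\<Sum>s<Suc R. Af m (int R + 1 - int s))
       + (\<Sum>s<Suc R. Af m (int R + 3 + int s)) + (\<Sum>s<Suc R. Af m (2 * int R + 3 - int s))"
    unfolding iv Fm_def by (simp add: sum.distrib sum_subtractf)
  also have "\<dots> = Gc m (int R)" unfolding a1 a2 a3 a4 Gc_def by simp
  finally show ?thesis .
qed

lemma Gc_neg: "Gc m (-1) = 0" unfolding Gc_def by simp

lemma Gc_second_diff:
  assumes "1 \<le> M" "int m < 2*M"
  shows "Gc m M - 2 * Gc m (M-1) + Gc m (M-2) = 2 * (Af m M - Af m (M+2))"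
proof -
  have t0: "Tl m M = Af m M + Tl m (M+1)" using assms by (intro Tl_step) simp
  have t1: "Tl m (M+1) = Af m (M+1) + Tl m (M+2)" using assms Tl_step[of "M+1" m] by (simp add: add.commute)
  have t2: "Tl m (M+2) = Af m (M+2) + Tl m (M+3)" using assms Tl_step[of "M+2" m] by (simp add: add.commute)
  have z: "Tl m (2*M+4) = 0" "Tl m (2*(M-1)+4) = 0" "Tl m (2*(M-2)+4) = 0"
    using assms by (auto intro!: Tl_zero)
  show ?thesis unfolding Gc_def using t0 t1 t2 z by (simp add: algebra_simps)
qed

definition WS :: "nat \<Rightarrow> nat \<Rightarrow> nat list set" where
  "WS R n = {xs. length xs = n \<and> isw xs \<and> set xs \<subseteq> {..R}}"

lemma finite_WS: "finite (WS R n)"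
proof -
  have "WS R n \<subseteq> {xs. set xs \<subseteq> {..R} \<and> length xs = n}" unfolding WS_def by auto
  moreover have "finite {xs. set xs \<subseteq> {..R} \<and> length xs = n}"
    by (rule finite_lists_length_eq) simp
  ultimately show ?thesis by (rule finite_subset)
qed

lemma WS_Suc: "WS R (Suc m) = (\<Union>s\<in>{0..R}. WSs R s m)"
proof (intro equalityI subsetI)
  fix xs assume "xs \<in> WS R (Suc m)"
  then show "xs \<in> (\<Union>s\<in>{0..R}. WSs R s m)" unfolding WS_def WSs_def
    by (cases xs) auto
next
  fix xs assume "xs \<in> (\<Union>s\<in>{0..R}. WSs R s m)"
  then show "xs \<in> WS R (Suc m)" unfolding WS_def WSs_def by auto
qed

lemma card_WS:
  assumes "int m \<le> 2*int R+3"
  shows "int (card (WS R (Suc m))) = Gc m (int R)"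
proof -
  have "card (WS R (Suc m)) = (\<Sum>s\<in>{0..R}. card (WSs R s m))"
    unfolding WS_Suc
    by (rule card_UN_disjoint) (auto simp: finite_WSs[unfolded WSs_def] WSs_def)
  hence "int (card (WS R (Suc m))) = (\<Sum>s\<in>{0..R}. Fm m (int R) (int s))"
    using H_formula[OF assms] by simp
  also have "\<dots> = Gc m (int R)" using G_closed assms by simp
  finally show ?thesis .
qed

lemma isw_nth: "isw xs \<longleftrightarrow> (\<forall>i. Suc i < length xs \<longrightarrow> (xs!Suc i = Suc (xs!i) \<or> xs!i = Suc (xs!Suc i)))"
proof (induction xs rule: isw.induct)
  case (1 x y zs)
  show ?case
  proof
    assume a: "isw (x # y # zs)"
    show "\<forall>i. Suc i < length (x # y # zs) \<longrightarrow> ((x # y # zs)!Suc i = Suc ((x # y # zs)!i) \<or> (x # y # zs)!i = Suc ((x # y # zs)!Suc i))"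
    proof (intro allI impI)
      fix i assume i: "Suc i < length (x # y # zs)"
      show "(x # y # zs)!Suc i = Suc ((x # y # zs)!i) \<or> (x # y # zs)!i = Suc ((x # y # zs)!Suc i)"
      proof (cases i)
        case 0 then show ?thesis using a by simp
      next
        case (Suc j) then show ?thesis using a 1 i by auto
      qed
    qed
  next
    assume a: "\<forall>i. Suc i < length (x # y # zs) \<longrightarrow> ((x # y # zs)!Suc i = Suc ((x # y # zs)!i) \<or> (x # y # zs)!i = Suc ((x # y # zs)!Suc i))"
    have "y = Suc x \<or> x = Suc y" using a[rule_format, of 0] by simp
    moreover have "isw (y # zs)"
    proof -
      have "\<forall>i. Suc i < length (y # zs) \<longrightarrow> ((y # zs)!Suc i = Suc ((y # zs)!i) \<or> (y # zs)!i = Suc ((y # zs)!Suc i))"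
        using a by (auto dest: spec[of _ "Suc _"])
      then show ?thesis using 1 by blast
    qed
    ultimately show "isw (x # y # zs)" by simp
  qed
qed auto

lemma isw_map:
  assumes "isw xs" "\<And>a b. a \<in> set xs \<Longrightarrow> b \<in> set xs \<Longrightarrow> b = Suc a \<Longrightarrow> (g b = Suc (g a) \<or> g a = Suc (g b))"
  shows "isw (map g xs)"
proof -
  have "\<forall>i. Suc i < length xs \<longrightarrow> (xs!Suc i = Suc (xs!i) \<or> xs!i = Suc (xs!Suc i))" using assms(1) isw_nth by blast
  then show ?thesis unfolding isw_nth
    using assms(2) by (auto simp: nth_mem) (metis Suc_lessD nth_mem)+
qed

definition HB :: "nat \<Rightarrow> nat \<Rightarrow> nat list set" where
  "HB M n = {xs \<in> WS M n. 0 \<in> set xs \<and> M \<in> set xs}"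

lemma finite_HB: "finite (HB M n)" unfolding HB_def using finite_WS by auto

lemma WS_noM: "1 \<le> M \<Longrightarrow> {xs \<in> WS M n. M \<notin> set xs} = WS (M-1) n"
proof -
  assume M: "1 \<le> M"
  have "\<And>A. (A \<subseteq> {..M} \<and> M \<notin> A) = (A \<subseteq> {..M-1})"
  proof
    fix A :: "nat set" assume "A \<subseteq> {..M} \<and> M \<notin> A"
    then show "A \<subseteq> {..M-1}"
    proof (intro subsetI)
      fix x assume "A \<subseteq> {..M} \<and> M \<notin> A" "x \<in> A"
      then have "x \<le> M" "x \<noteq> M" by auto
      then show "x \<in> {..M-1}" by simp
    qed
  next
    fix A :: "nat set" assume "A \<subseteq> {..M-1}"
    then show "A \<subseteq> {..M} \<and> M \<notin> A" using M by auto
  qed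
  then show ?thesis unfolding WS_def by blast
qed

lemma WS_no0: "1 \<le> M \<Longrightarrow> {xs \<in> WS M n. 0 \<notin> set xs} = map Suc ` WS (M-1) n"
proof (intro equalityI subsetI)
  fix xs assume a: "xs \<in> {xs \<in> WS M n. 0 \<notin> set xs}" and M: "1 \<le> M"
  define ys where "ys = map (\<lambda>x. x - 1) xs"
  have no0: "0 \<notin> set xs" using a by simp
  have "map Suc (map (\<lambda>x. x - 1) xs) = xs" using no0 by (induction xs) auto
  hence "xs = map Suc ys" unfolding ys_def by simp
  moreover have "ys \<in> WS (M-1) n"
  proof -
    have "isw ys" unfolding ys_def
    proof (rule isw_map)
      show "isw xs" using a unfolding WS_def by simp
      fix u v assume "u \<in> set xs" "v \<in> set xs" "v = Suc u"
      moreover have "u \<noteq> 0" using no0 \<open>u \<in> set xs\<close> by metis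
      ultimately show "v - 1 = Suc (u - 1) \<or> u - 1 = Suc (v - 1)" by simp
    qed
    moreover have "set ys \<subseteq> {..M-1}" unfolding ys_def using a unfolding WS_def by auto
    ultimately show ?thesis unfolding WS_def ys_def using a unfolding WS_def by simp
  qed
  ultimately show "xs \<in> map Suc ` WS (M-1) n" by blast
next
  fix xs assume a: "xs \<in> map Suc ` WS (M-1) n" and M: "1 \<le> M"
  then obtain ys where ys: "ys \<in> WS (M-1) n" "xs = map Suc ys" by auto
  have "isw xs" using ys unfolding WS_def by (auto intro: isw_map)
  then show "xs \<in> {xs \<in> WS M n. 0 \<notin> set xs}" using ys M unfolding WS_def by auto
qed

lemma WS_no0M: "2 \<le> M \<Longrightarrow> {xs \<in> WS M n. 0 \<notin> set xs \<and> M \<notin> set xs} = map Suc ` WS (M-2) n"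
proof -
  assume M: "2 \<le> M"
  have "{xs \<in> WS M n. 0 \<notin> set xs \<and> M \<notin> set xs} = {xs \<in> WS (M-1) n. 0 \<notin> set xs}"
    using WS_noM[of M n] M by auto
  also have "\<dots> = map Suc ` WS (M-1-1) n" using WS_no0[of "M-1" n] M by simp
  finally show ?thesis by (simp add: numeral_2_eq_2)
qed

lemma WS_no01: "1 \<le> n \<Longrightarrow> {xs \<in> WS 1 n. 0 \<notin> set xs \<and> 1 \<notin> set xs} = {}"
proof (intro equalityI subsetI)
  fix xs assume n: "1 \<le> n" and xs: "xs \<in> {xs \<in> WS 1 n. 0 \<notin> set xs \<and> 1 \<notin> set xs}"
  then have "xs \<noteq> []" unfolding WS_def by auto
  then obtain x where x: "x \<in> set xs" by (cases xs) auto
  then have "x \<le> 1" using xs unfolding WS_def by auto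
  then have "x = 0 \<or> x = 1" by auto
  then show "xs \<in> {}" using x xs by auto
qed simp

lemma card_map_Suc: "card (map Suc ` A) = card A"
  by (rule card_image) (simp add: inj_on_def)

lemma card_HB:
  assumes M: "1 \<le> M" and m: "int m < 2 * int M"
  shows "int (card (HB M (Suc m))) = Gc m (int M) - 2 * Gc m (int M - 1) + Gc m (int M - 2)"
proof -
  define W where "W = WS M (Suc m)"
  define H where "H = HB M (Suc m)"
  define Z0 where "Z0 = {xs \<in> W. 0 \<notin> set xs}"
  define ZM where "ZM = {xs \<in> W. M \<notin> set xs}"
  have split: "W = H \<union> (Z0 \<union> ZM)" unfolding HB_def H_def Z0_def ZM_def W_def by auto
  have disj: "H \<inter> (Z0 \<union> ZM) = {}" unfolding HB_def H_def Z0_def ZM_def W_def by auto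
  have fin: "finite Z0" "finite ZM" "finite H" unfolding Z0_def ZM_def W_def H_def
    using finite_WS[of M "Suc m"] finite_HB[of M "Suc m"] by (auto intro: finite_subset[of _ "WS M (Suc m)"])
  have c1: "card W = card H + card (Z0 \<union> ZM)"
    unfolding split by (rule card_Un_disjoint[OF fin(3) finite_UnI[OF fin(1) fin(2)] disj])
  have c2: "card (Z0 \<union> ZM) + card (Z0 \<inter> ZM) = card Z0 + card ZM"
    using card_Un_Int[OF fin(1) fin(2)] by simp
  have z0: "int (card Z0) = Gc m (int M - 1)"
  proof -
    have "Z0 = map Suc ` WS (M-1) (Suc m)" unfolding Z0_def W_def using WS_no0[OF M, of "Suc m"] .
    hence "card Z0 = card (WS (M-1) (Suc m))" using card_map_Suc by simp
    moreover have "int (card (WS (M-1) (Suc m))) = Gc m (int (M-1))" using card_WS[of m "M-1"] M m by simp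
    ultimately show ?thesis using M by (simp add: of_nat_diff)
  qed
  have zM: "int (card ZM) = Gc m (int M - 1)"
  proof -
    have "ZM = WS (M-1) (Suc m)" unfolding ZM_def W_def using WS_noM[OF M, of "Suc m"] .
    moreover have "int (card (WS (M-1) (Suc m))) = Gc m (int (M-1))" using card_WS[of m "M-1"] M m by simp
    ultimately show ?thesis using M by (simp add: of_nat_diff)
  qed
  have zz: "int (card (Z0 \<inter> ZM)) = Gc m (int M - 2)"
  proof (cases "M = 1")
    case True
    have "Z0 \<inter> ZM = {}" using WS_no01[of "Suc m"] True unfolding Z0_def ZM_def W_def by auto
    then show ?thesis using True Gc_neg by simp
  next
    case False
    hence M2: "2 \<le> M" using M by simp
    have "Z0 \<inter> ZM = {xs \<in> W. 0 \<notin> set xs \<and> M \<notin> set xs}" unfolding Z0_def ZM_def by auto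
    hence "Z0 \<inter> ZM = map Suc ` WS (M-2) (Suc m)" unfolding W_def using WS_no0M[OF M2, of "Suc m"] by simp
    hence "card (Z0 \<inter> ZM) = card (WS (M-2) (Suc m))" using card_map_Suc by simp
    moreover have "int (card (WS (M-2) (Suc m))) = Gc m (int (M-2))" using card_WS[of m "M-2"] M2 m by simp
    ultimately show ?thesis using M2 by (simp add: of_nat_diff)
  qed
  have w: "int (card W) = Gc m (int M)" using card_WS[of m M] m unfolding W_def by simp
  show ?thesis using c1 c2 z0 zM zz w unfolding H_def by linarith
qed

definition NL :: "nat \<Rightarrow> nat \<Rightarrow> nat list set" where
  "NL M n = {xs \<in> HB M n. xs!1 = Suc (xs!0)}"

definition rf :: "nat \<Rightarrow> nat list \<Rightarrow> nat list" where
  "rf M xs = map (\<lambda>x. M - x) xs"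

lemma rf_HB: "xs \<in> HB M n \<Longrightarrow> rf M xs \<in> HB M n"
proof -
  assume a: "xs \<in> HB M n"
  have "isw (rf M xs)" unfolding rf_def using a unfolding HB_def WS_def
    by (intro isw_map) auto
  moreover have "0 \<in> set (rf M xs)" using a unfolding HB_def rf_def by force
  moreover have "M \<in> set (rf M xs)" using a unfolding HB_def rf_def by force
  ultimately show ?thesis using a unfolding HB_def WS_def rf_def by auto
qed

lemma rf_rf: "xs \<in> HB M n \<Longrightarrow> rf M (rf M xs) = xs"
proof -
  assume "xs \<in> HB M n"
  then have "\<forall>x\<in>set xs. x \<le> M" unfolding HB_def WS_def by auto
  then show ?thesis unfolding rf_def by (induction xs) auto
qed

lemma card_HB_NL:
  assumes n: "2 \<le> n"
  shows "card (HB M n) = 2 * card (NL M n)"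
proof -
  define D where "D = {xs \<in> HB M n. xs!0 = Suc (xs!1)}"
  have split: "HB M n = NL M n \<union> D"
  proof (intro equalityI subsetI)
    fix xs assume a: "xs \<in> HB M n"
    have "Suc 0 < length xs" using a n unfolding HB_def WS_def by auto
    hence "xs!1 = Suc (xs!0) \<or> xs!0 = Suc (xs!1)" using a unfolding HB_def WS_def isw_nth by auto
    then show "xs \<in> NL M n \<union> D" using a unfolding NL_def D_def by auto
  qed (auto simp: NL_def D_def)
  have disj: "NL M n \<inter> D = {}" unfolding NL_def D_def by auto
  have img: "rf M ` D = NL M n"
  proof (intro equalityI subsetI)
    fix ys assume "ys \<in> rf M ` D"
    then obtain xs where xs: "xs \<in> HB M n" "xs!0 = Suc (xs!1)" "ys = rf M xs" unfolding D_def by auto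
    have l: "Suc 0 < length xs" using xs n unfolding HB_def WS_def by auto
    have "xs!0 \<in> set xs" using l by (intro nth_mem) linarith
    hence "xs!0 \<le> M" using xs(1) unfolding HB_def WS_def by auto
    moreover have "0 < length xs" using l by linarith
    hence "rf M xs ! 0 = M - xs!0" "rf M xs ! 1 = M - xs!1" using l unfolding rf_def by auto
    ultimately show "ys \<in> NL M n" using xs rf_HB[of xs M n] unfolding NL_def by auto
  next
    fix ys assume ys: "ys \<in> NL M n"
    have l: "Suc 0 < length ys" using ys n unfolding NL_def HB_def WS_def by auto
    have "ys!1 \<in> set ys" using l by (intro nth_mem) simp
    hence "ys!1 \<le> M" using ys unfolding NL_def HB_def WS_def by auto
    moreover have "0 < length ys" using l by linarith
    hence "rf M ys ! 0 = M - ys!0" "rf M ys ! 1 = M - ys!1" using l unfolding rf_def by auto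
    ultimately have "rf M ys \<in> D" unfolding D_def using ys rf_HB[of ys M n] unfolding NL_def by auto
    moreover have "ys = rf M (rf M ys)" using rf_rf ys unfolding NL_def by auto
    ultimately show "ys \<in> rf M ` D" by blast
  qed
  have inj: "inj_on (rf M) D"
    by (rule inj_on_inverseI[where g = "rf M"]) (auto simp: D_def intro: rf_rf)
  have "card D = card (NL M n)" using card_image[OF inj] img by simp
  moreover have "card (HB M n) = card (NL M n) + card D"
  proof -
    have f: "finite (NL M n)" "finite D" using finite_HB[of M n] unfolding NL_def D_def by auto
    show ?thesis by (subst split) (rule card_Un_disjoint[OF f disj])
  qed
  ultimately show ?thesis by simp
qed

lemma card_NL:
  assumes M: "1 \<le> M" and m: "int m < 2 * int M" "1 \<le> m"
  shows "int (card (NL M (Suc m))) = Af m (int M) - Af m (int M + 2)"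
proof -
  have "int (card (HB M (Suc m))) = 2 * (Af m (int M) - Af m (int M + 2))"
    using card_HB[OF M m(1)] Gc_second_diff[of "int M" m] M m by simp
  moreover have "card (HB M (Suc m)) = 2 * card (NL M (Suc m))" using card_HB_NL m by simp
  ultimately show ?thesis by simp
qed

lemma ip_alt: "induced_partition n f = (\<lambda>j. {i \<in> {1..n}. f i = f j}) ` {1..n}"
  unfolding induced_partition_def by auto

lemma ip_alt2: "induced_partition n f = (\<lambda>y. {i \<in> {1..n}. f i = y}) ` (f ` {1..n})"
  unfolding induced_partition_def by auto

lemma ip_cong:
  assumes "\<And>i j. i \<in> {1..n} \<Longrightarrow> j \<in> {1..n} \<Longrightarrow> (f i = f j \<longleftrightarrow> g i = g j)"
  shows "induced_partition n f = induced_partition n g"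
  unfolding ip_alt
proof (rule image_cong[OF refl])
  fix j assume j: "j \<in> {1..n}"
  show "{i \<in> {1..n}. f i = f j} = {i \<in> {1..n}. g i = g j}" using assms[OF _ j] by auto
qed

lemma ip_card: "card (induced_partition n f) = card (f ` {1..n})"
proof -
  have "inj_on (\<lambda>y. {i \<in> {1..n}. f i = y}) (f ` {1..n})"
  proof (rule inj_onI)
    fix y1 y2 assume y: "y1 \<in> f ` {1..n}" "y2 \<in> f ` {1..n}"
      and e: "{i \<in> {1..n}. f i = y1} = {i \<in> {1..n}. f i = y2}"
    from y(1) obtain i where i: "i \<in> {1..n}" "f i = y1" by auto
    then have "i \<in> {i \<in> {1..n}. f i = y2}" using e by blast
    then show "y1 = y2" using i by simp
  qed
  then show ?thesis unfolding ip_alt2 by (rule card_image)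
qed

lemma ip_block:
  assumes "i \<in> {1..n}" "j \<in> {1..n}"
  shows "(\<exists>B\<in>induced_partition n f. i \<in> B \<and> j \<in> B) \<longleftrightarrow> f i = f j"
  using assms unfolding ip_alt by auto

definition fl :: "nat list \<Rightarrow> nat \<Rightarrow> nat" where
  "fl xs = (\<lambda>i. Suc (xs ! (i - 1)))"

lemma fl_image: "length xs = n \<Longrightarrow> fl xs ` {1..n} = Suc ` set xs"
proof (intro equalityI subsetI)
  fix y assume l: "length xs = n" and "y \<in> fl xs ` {1..n}"
  then obtain i where i: "i \<in> {1..n}" "y = Suc (xs ! (i-1))" unfolding fl_def by auto
  then have "xs ! (i-1) \<in> set xs" using l by (intro nth_mem) auto
  then show "y \<in> Suc ` set xs" using i by auto
next
  fix y assume l: "length xs = n" and "y \<in> Suc ` set xs"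
  then obtain k where k: "k < n" "y = Suc (xs ! k)" by (auto simp: in_set_conv_nth)
  then have "Suc k \<in> {1..n}" "fl xs (Suc k) = y" unfolding fl_def by auto
  then show "y \<in> fl xs ` {1..n}" by (metis image_eqI)
qed

lemma isw_interval: "isw xs \<Longrightarrow> a \<in> set xs \<Longrightarrow> b \<in> set xs \<Longrightarrow> a \<le> c \<Longrightarrow> c \<le> b \<Longrightarrow> c \<in> set xs"
proof (induction xs arbitrary: a b rule: isw.induct)
  case (1 x y zs)
  have yx: "y = Suc x \<or> x = Suc y" and tl: "isw (y # zs)" using "1.prems"(1) by auto
  show ?case
  proof (cases "c = x")
    case True then show ?thesis by simp
  next
    case cx: False
    show ?thesis
    proof (cases "a = x")
      case ax: True
      then have bx: "b \<noteq> x" using cx "1.prems" by auto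
      then have b: "b \<in> set (y # zs)" using "1.prems"(3) by auto
      have "y \<le> c" using yx ax cx "1.prems"(4) by auto
      then have "c \<in> set (y # zs)" using "1.IH"[OF tl, of y b] b "1.prems"(5) by simp
      then show ?thesis by simp
    next
      case ax: False
      then have a: "a \<in> set (y # zs)" using "1.prems"(2) by auto
      show ?thesis
      proof (cases "b = x")
        case bx: True
        have "c \<le> y" using yx bx cx "1.prems"(5) by auto
        then have "c \<in> set (y # zs)" using "1.IH"[OF tl, of a y] a "1.prems"(4) by simp
        then show ?thesis by simp
      next
        case False
        then have b: "b \<in> set (y # zs)" using "1.prems"(3) by auto
        then show ?thesis using "1.IH"[OF tl a b "1.prems"(4,5)] by simp
      qed
    qed
  qed
qed auto

lemma HB_set: "xs \<in> HB M n \<Longrightarrow> set xs = {0..M}"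
proof (intro equalityI subsetI)
  fix c assume "xs \<in> HB M n" "c \<in> set xs" then show "c \<in> {0..M}" unfolding HB_def WS_def by auto
next
  fix c assume xs: "xs \<in> HB M n" and "c \<in> {0..M}"
  then show "c \<in> set xs" using isw_interval[of xs 0 M c] unfolding HB_def WS_def by auto
qed

lemma fl_endo:
  assumes "xs \<in> WS M n" "M < n"
  shows "path_endo n (fl xs)"
  unfolding path_endo_def
proof (intro conjI ballI allI impI)
  fix i assume i: "i \<in> {1..n}"
  then have "xs ! (i-1) \<in> set xs" using assms unfolding WS_def by (intro nth_mem) auto
  then have "xs ! (i-1) \<le> M" using assms unfolding WS_def by auto
  then show "fl xs i \<in> {1..n}" unfolding fl_def using assms by auto
next
  fix i assume i: "1 \<le> i \<and> i \<le> n - 1"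
  have w: "isw xs" "length xs = n" using assms unfolding WS_def by auto
  have ii: "Suc (i-1) < length xs" using i w by auto
  have "xs!Suc (i-1) = Suc (xs!(i-1)) \<or> xs!(i-1) = Suc (xs!Suc (i-1))"
    using w(1) ii unfolding isw_nth by blast
  moreover have "Suc (i-1) = i" "(i+1) - 1 = i" using i by auto
  ultimately have "xs!i = Suc (xs!(i-1)) \<or> xs!(i-1) = Suc (xs!i)" by simp
  then show "\<bar>int (fl xs i) - int (fl xs (i + 1))\<bar> = 1" unfolding fl_def by auto
qed

lemma rf_NL:
  assumes xs: "xs \<in> HB M n" and n: "2 \<le> n" and nu: "xs!1 \<noteq> Suc (xs!0)"
  shows "rf M xs \<in> NL M n"
proof -
  have l: "Suc 0 < length xs" "0 < length xs" using xs n unfolding HB_def WS_def by auto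
  have "xs!1 = Suc (xs!0) \<or> xs!0 = Suc (xs!1)" using xs l unfolding HB_def WS_def isw_nth by auto
  hence d: "xs!0 = Suc (xs!1)" using nu by simp
  have "xs!0 \<in> set xs" using l by (intro nth_mem) linarith
  hence "xs!0 \<le> M" using xs unfolding HB_def WS_def by auto
  moreover have "rf M xs ! 0 = M - xs!0" "rf M xs ! 1 = M - xs!1" using l unfolding rf_def by auto
  ultimately show ?thesis using rf_HB[OF xs] d unfolding NL_def by auto
qed

lemma NL_inj_aux:
  assumes xs: "xs \<in> NL M n" and ys: "ys \<in> NL M n" and n: "2 \<le> n"
    and eq: "\<And>p q. p < n \<Longrightarrow> q < n \<Longrightarrow> (xs!p = xs!q \<longleftrightarrow> ys!p = ys!q)"
  shows "xs = ys"
proof -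
  have lx: "length xs = n" "isw xs" "0 \<in> set xs" "xs!1 = Suc (xs!0)"
    using xs unfolding NL_def HB_def WS_def by auto
  have ly: "length ys = n" "isw ys" "0 \<in> set ys" "ys!1 = Suc (ys!0)"
    using ys unfolding NL_def HB_def WS_def by auto
  have stx: "\<And>i. Suc i < n \<Longrightarrow> xs!Suc i = Suc (xs!i) \<or> xs!i = Suc (xs!Suc i)"
    using lx unfolding isw_nth by auto
  have sty: "\<And>i. Suc i < n \<Longrightarrow> ys!Suc i = Suc (ys!i) \<or> ys!i = Suc (ys!Suc i)"
    using ly unfolding isw_nth by auto
  have step: "Suc i < n \<Longrightarrow> int (xs!Suc i) - int (xs!i) = int (ys!Suc i) - int (ys!i)" for i
  proof (induction i)
    case 0 then show ?case using lx ly by simp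
  next
    case (Suc i)
    have ih: "int (xs!Suc i) - int (xs!i) = int (ys!Suc i) - int (ys!i)" using Suc by simp
    have e: "xs!i = xs!Suc (Suc i) \<longleftrightarrow> ys!i = ys!Suc (Suc i)" using eq[of i "Suc (Suc i)"] Suc.prems by simp
    have a1: "xs!Suc i = Suc (xs!i) \<or> xs!i = Suc (xs!Suc i)" using stx[of i] Suc.prems by simp
    have a2: "xs!Suc (Suc i) = Suc (xs!Suc i) \<or> xs!Suc i = Suc (xs!Suc (Suc i))" using stx[of "Suc i"] Suc.prems by simp
    have b2: "ys!Suc (Suc i) = Suc (ys!Suc i) \<or> ys!Suc i = Suc (ys!Suc (Suc i))" using sty[of "Suc i"] Suc.prems by simp
    show ?case
    proof (cases "xs!i = xs!Suc (Suc i)")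
      case True
      then have "ys!i = ys!Suc (Suc i)" using e by simp
      then show ?thesis using True ih a1 a2 b2 by auto
    next
      case False
      then have "ys!i \<noteq> ys!Suc (Suc i)" using e by simp
      then show ?thesis using False ih a1 a2 b2 by auto
    qed
  qed
  have diff: "i < n \<Longrightarrow> int (xs!i) - int (xs!0) = int (ys!i) - int (ys!0)" for i
  proof (induction i)
    case 0 then show ?case by simp
  next
    case (Suc i) then show ?case using step[of i] by simp
  qed
  obtain p where p: "p < n" "xs!p = 0" using lx by (auto simp: in_set_conv_nth)
  obtain q where q: "q < n" "ys!q = 0" using ly by (auto simp: in_set_conv_nth)
  have "int (ys!0) \<ge> int (xs!0)" using diff[OF p(1)] p by simp
  moreover have "int (xs!0) \<ge> int (ys!0)" using diff[OF q(1)] q by simp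
  ultimately have z: "xs!0 = ys!0" by simp
  show ?thesis
  proof (rule nth_equalityI)
    show "length xs = length ys" using lx ly by simp
    fix i assume "i < length xs"
    then show "xs!i = ys!i" using diff[of i] z lx by simp
  qed
qed

definition Phi :: "nat \<Rightarrow> nat list \<Rightarrow> nat set set" where
  "Phi n xs = induced_partition n (fl xs)"

lemma Phi_inj:
  assumes n: "2 \<le> n"
  shows "inj_on (Phi n) (NL M n)"
proof (rule inj_onI)
  fix xs ys assume xs: "xs \<in> NL M n" and ys: "ys \<in> NL M n" and e: "Phi n xs = Phi n ys"
  show "xs = ys"
  proof (rule NL_inj_aux[OF xs ys n])
    fix p q assume p: "p < n" and q: "q < n"
    have i: "Suc p \<in> {1..n}" "Suc q \<in> {1..n}" using p q by auto
    have "fl xs (Suc p) = fl xs (Suc q) \<longleftrightarrow> fl ys (Suc p) = fl ys (Suc q)"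
      using ip_block[OF i, of "fl xs"] ip_block[OF i, of "fl ys"] e unfolding Phi_def by simp
    then show "xs!p = xs!q \<longleftrightarrow> ys!p = ys!q" unfolding fl_def by simp
  qed
qed

lemma Phi_in:
  assumes xs: "xs \<in> NL M n" and M: "M < n"
  shows "Phi n xs \<in> {\<rho> \<in> C_path n. card \<rho> = Suc M}"
proof -
  have h: "xs \<in> HB M n" "xs \<in> WS M n" and l: "length xs = n" using xs unfolding NL_def HB_def WS_def by auto
  have "path_endo n (fl xs)" using fl_endo[OF h(2) M] .
  hence "Phi n xs \<in> C_path n" unfolding C_path_def Phi_def by auto
  moreover have "card (Phi n xs) = Suc M"
  proof -
    have "card (Phi n xs) = card (Suc ` set xs)" unfolding Phi_def ip_card fl_image[OF l] ..
    also have "\<dots> = card (set xs)" by (rule card_image) simp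
    also have "\<dots> = Suc M" using HB_set[OF h(1)] by simp
    finally show ?thesis .
  qed
  ultimately show ?thesis by simp
qed

lemma Phi_surj:
  assumes n: "2 \<le> n" and M: "M < n" and rho: "\<rho> \<in> C_path n" "card \<rho> = Suc M"
  shows "\<rho> \<in> Phi n ` NL M n"
proof -
  obtain f where f: "path_endo n f" "\<rho> = induced_partition n f" using rho unfolding C_path_def by auto
  define L where "L = map f [1..<Suc n]"
  have lL: "length L = n" unfolding L_def by simp
  have Lnth: "\<And>k. k < n \<Longrightarrow> L!k = f (Suc k)" unfolding L_def by (simp del: upt_Suc)
  have iswL: "isw L" unfolding isw_nth
  proof (intro allI impI)
    fix k assume k: "Suc k < length L"
    then have "\<bar>int (f (Suc k)) - int (f (Suc k + 1))\<bar> = 1" using f(1) lL unfolding path_endo_def by auto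
    then show "L!Suc k = Suc (L!k) \<or> L!k = Suc (L!Suc k)" using Lnth k lL by auto
  qed
  have setL: "set L = f ` {1..n}" unfolding L_def by auto
  have cL: "card (set L) = Suc M" using rho(2) f(2) ip_card setL by simp
  have ne: "set L \<noteq> {}" using lL n by auto
  define lo where "lo = Min (set L)"
  define hi where "hi = Max (set L)"
  have lo: "lo \<in> set L" "\<And>x. x \<in> set L \<Longrightarrow> lo \<le> x" unfolding lo_def using ne by auto
  have hi: "hi \<in> set L" "\<And>x. x \<in> set L \<Longrightarrow> x \<le> hi" unfolding hi_def using ne by auto
  have "set L = {lo..hi}"
  proof (intro equalityI subsetI)
    fix x assume "x \<in> set L" then show "x \<in> {lo..hi}" using lo hi by auto
  next
    fix x assume "x \<in> {lo..hi}" then show "x \<in> set L" using isw_interval[OF iswL lo(1) hi(1)] by auto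
  qed
  hence "card {lo..hi} = Suc M" using cL by simp
  hence c1: "Suc hi - lo = Suc M" by simp
  have "lo \<le> hi" using lo(2)[OF hi(1)] .
  hence hl: "hi = lo + M" using c1 by linarith
  define L0 where "L0 = map (\<lambda>x. x - lo) L"
  have lL0: "length L0 = n" unfolding L0_def using lL by simp
  have L0nth: "\<And>k. k < n \<Longrightarrow> L0!k = L!k - lo" unfolding L0_def using lL by simp
  have L0HB: "L0 \<in> HB M n"
  proof -
    have "isw L0" unfolding L0_def
    proof (rule isw_map[OF iswL])
      fix a b assume "a \<in> set L" "b \<in> set L" "b = Suc a"
      then show "b - lo = Suc (a - lo) \<or> a - lo = Suc (b - lo)" using lo(2)[of a] by auto
    qed
    moreover have "set L0 \<subseteq> {..M}"
    proof
      fix y assume "y \<in> set L0"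
      then obtain x where x: "x \<in> set L" "y = x - lo" unfolding L0_def by auto
      then have "x \<le> lo + M" using hi(2) hl by auto
      then show "y \<in> {..M}" using x by simp
    qed
    moreover have "0 \<in> set L0" unfolding L0_def using lo(1) by force
    moreover have "M \<in> set L0" unfolding L0_def using hi(1) hl by force
    ultimately show ?thesis unfolding HB_def WS_def using lL0 by simp
  qed
  have eqL0: "\<And>p q. p < n \<Longrightarrow> q < n \<Longrightarrow> (L0!p = L0!q \<longleftrightarrow> L!p = L!q)"
  proof -
    fix p q assume "p < n" "q < n"
    moreover then have "lo \<le> L!p" "lo \<le> L!q" using lo(2) lL by auto
    ultimately show "L0!p = L0!q \<longleftrightarrow> L!p = L!q" using L0nth by auto
  qed
  define xs where "xs = (if L0!1 = Suc (L0!0) then L0 else rf M L0)"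
  have xsNL: "xs \<in> NL M n"
    using L0HB rf_NL[OF L0HB n] unfolding xs_def NL_def by auto
  have eqxs: "\<And>p q. p < n \<Longrightarrow> q < n \<Longrightarrow> (xs!p = xs!q \<longleftrightarrow> L!p = L!q)"
  proof -
    fix p q assume pq: "p < n" "q < n"
    have b: "L0!p \<le> M" "L0!q \<le> M" using L0HB pq lL0 unfolding HB_def WS_def by (auto dest: nth_mem)
    have "xs!p = xs!q \<longleftrightarrow> L0!p = L0!q"
      unfolding xs_def rf_def using pq lL0 b by auto
    then show "xs!p = xs!q \<longleftrightarrow> L!p = L!q" using eqL0[OF pq] by simp
  qed
  have "Phi n xs = \<rho>" unfolding Phi_def f(2)
  proof (rule ip_cong)
    fix i j assume ij: "i \<in> {1..n}" "j \<in> {1..n}"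
    then have "xs!(i-1) = xs!(j-1) \<longleftrightarrow> L!(i-1) = L!(j-1)" using eqxs by auto
    moreover have "L!(i-1) = f i" "L!(j-1) = f j" using Lnth[of "i-1"] Lnth[of "j-1"] ij by auto
    ultimately show "fl xs i = fl xs j \<longleftrightarrow> f i = f j" unfolding fl_def by simp
  qed
  then show ?thesis using xsNL by blast
qed

lemma card_T:
  assumes n: "2 \<le> n" and M: "M < n"
  shows "card {\<rho> \<in> C_path n. card \<rho> = Suc M} = card (NL M n)"
proof -
  have "{\<rho> \<in> C_path n. card \<rho> = Suc M} = Phi n ` NL M n"
    using Phi_in[OF _ M] Phi_surj[OF n M] by blast
  then show ?thesis using card_image[OF Phi_inj[OF n]] by simp
qed

lemma ceil_half: "\<lceil>real k / 2\<rceil> = int ((k + 1) div 2)"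
proof (cases "even k")
  case True
  then obtain a where a: "k = 2*a" by auto
  have "real k / 2 = real a" using a by simp
  then show ?thesis using a by simp
next
  case False
  then obtain a where a: "k = 2*a+1" by (metis oddE)
  have e: "real k / 2 = real a + 1/2" using a by (simp add: field_simps)
  have c: "\<lceil>real k / 2\<rceil> = int a + 1" unfolding e by (rule ceiling_unique) auto
  have "(k + 1) div 2 = a + 1" using a by simp
  then show ?thesis using c by simp
qed

lemma floor_half: "\<lfloor>real k / 2\<rfloor> = int (k div 2)"
proof (cases "even k")
  case True
  then obtain a where a: "k = 2*a" by auto
  have "real k / 2 = real a" using a by simp
  then show ?thesis using a by simp
next
  case False
  then obtain a where a: "k = 2*a+1" by (metis oddE)
  have e: "real k / 2 = real a + 1/2" using a by (simp add: field_simps)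
  have c: "\<lfloor>real k / 2\<rfloor> = int a" unfolding e by (rule floor_unique) auto
  have "k div 2 = a" using a by simp
  then show ?thesis using c by simp
qed

theorem theorem3:
  fixes k n :: nat
  assumes "k \<ge> 1" and "n \<ge> 2 * k"
  shows "l_count k n = zbinom (n - 1) (\<lceil>real k / 2\<rceil> - 1) + zbinom (n - 1) (\<lfloor>real k / 2\<rfloor> - 1)"
proof -
  define M where "M = n - k"
  define m where "m = n - 1"
  have n2: "2 \<le> n" using assms by simp
  have nm: "n = Suc m" unfolding m_def using n2 by simp
  have M1: "1 \<le> M" unfolding M_def using assms by simp
  have Mn: "M < n" unfolding M_def using assms by simp
  have mM: "int m < 2 * int M" unfolding m_def M_def using assms by simp
  have m1: "1 \<le> m" unfolding m_def using n2 by simp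
  have "l_count k n = card {\<rho> \<in> C_path n. card \<rho> = Suc M}"
    unfolding l_count_def M_def using assms by (simp add: Suc_diff_le)
  also have "\<dots> = card (NL M n)" using card_T[OF n2 Mn] .
  finally have lc: "int (l_count k n) = Af m (int M) - Af m (int M + 2)"
    using card_NL[OF M1 mM m1] nm by simp
  have d1: "Af m (int M) - Af m (int M + 1) = int (m choose ((k - 1) div 2))"
  proof -
    have "int M \<le> int m" "nat ((int m - int M) div 2) = (k - 1) div 2"
      unfolding m_def M_def using assms by (auto simp: nat_div_distrib of_nat_diff)
    then show ?thesis using D_closed[of "int M" m] by simp
  qed
  have d2: "Af m (int M + 1) - Af m (int M + 2) = (if 2 \<le> k then int (m choose ((k - 2) div 2)) else 0)"
  proof (cases "2 \<le> k")
    case True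
    have "int M + 1 \<le> int m" "nat ((int m - (int M + 1)) div 2) = (k - 2) div 2"
      unfolding m_def M_def using assms True by (auto simp: nat_div_distrib of_nat_diff)
    then show ?thesis using D_closed[of "int M + 1" m] True by (simp add: add.assoc)
  next
    case False
    have "\<not> int M + 1 \<le> int m" unfolding m_def M_def using assms False by auto
    then show ?thesis using D_closed[of "int M + 1" m] False by (simp add: add.assoc)
  qed
  have z1: "zbinom (n - 1) (\<lceil>real k / 2\<rceil> - 1) = m choose ((k - 1) div 2)"
  proof -
    have "\<lceil>real k / 2\<rceil> - 1 = int ((k - 1) div 2)" unfolding ceil_half using assms
      by (cases k) auto
    then show ?thesis unfolding zbinom_def m_def by simp
  qed
  have z2: "zbinom (n - 1) (\<lfloor>real k / 2\<rfloor> - 1) = (if 2 \<le> k then m choose ((k - 2) div 2) else 0)"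
  proof (cases "2 \<le> k")
    case True
    have "\<lfloor>real k / 2\<rfloor> - 1 = int ((k - 2) div 2)" unfolding floor_half using True
      by (auto simp: le_iff_add)
    then show ?thesis unfolding zbinom_def m_def using True by simp
  next
    case False
    then have "k = 1" using assms by simp
    then show ?thesis unfolding zbinom_def floor_half by simp
  qed
  have "int (l_count k n) = int (zbinom (n - 1) (\<lceil>real k / 2\<rceil> - 1) + zbinom (n - 1) (\<lfloor>real k / 2\<rfloor> - 1))"
  proof -
    have "int (l_count k n) = (Af m (int M) - Af m (int M + 1)) + (Af m (int M + 1) - Af m (int M + 2))"
      using lc by simp
    also have "\<dots> = int (m choose ((k - 1) div 2)) + (if 2 \<le> k then int (m choose ((k - 2) div 2)) else 0)"
      using d1 d2 by simp
    finally show ?thesis using z1 z2 by simp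
  qed
  then show ?thesis by simp
qed

end
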